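(* Let $\ell\in\{1,2\}$ and let ${\cal H}\subset{\cal H}_0$, $a_\ell$, $C_{{\rm G1},\ell}$, $C_{{\rm G2},\ell}$, ${\mathcal A}_\ell$ be as in the context (the standing assumptions there hold). If ${\mathcal A}_\ell^{-1}:{\cal H}^*\to{\cal H}$ exists, then $$\|{\mathcal A}_\ell^{-1}\|_{{\cal H}_0\to{\cal H}}\le\|{\mathcal A}_\ell^{-1}\|_{{\cal H}^*\to{\cal H}}\le (C_{{\rm G1},\ell})^{-1}\Big(1+C_{{\rm G2},\ell}\|{\mathcal A}_\ell^{-1}\|_{{\cal H}_0\to{\cal H}}\Big)$$ and $$\|{\mathcal A}_\ell^{-1}\|_{{\cal H}_0\to{\cal H}_0}\le\|{\mathcal A}_\ell^{-1}\|_{{\cal H}_0\to{\cal H}}\le (C_{{\rm G1},\ell})^{-1/2}\|{\mathcal A}_\ell^{-1}\|_{{\cal H}_0\to{\cal H}_0}\sqrt{C_{{\rm G2},\ell}+\|{\mathcal A}_\ell^{-1}\|_{{\cal H}_0\to{\cal H}_0}^{-1}}.$$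
   Context: Standing assumptions: ${\cal H}\subset{\cal H}_0$ are complex Hilbert spaces with $\|v\|_{{\cal H}_0}\le\|v\|_{{\cal H}}$ for $v\in{\cal H}$, and ${\cal H}_0$ is identified with its dual so that ${\cal H}\subset{\cal H}_0\subset{\cal H}^*$. ${\mathcal D}:{\cal H}\to{\cal H}_0$ is linear with $\|{\mathcal D}\|_{{\cal H}\to{\cal H}_0}\le 1$; $b(\cdot,\cdot)$ is a continuous sesquilinear form on ${\cal H}$; for $\ell=1,2$, $\mu_\ell^{-1}:{\cal H}_0\to{\cal H}_0$ and $\epsilon_\ell:{\cal H}_0\to{\cal H}_0$ are bounded linear operators, and $a_\ell(u,v):=(\mu_\ell^{-1}{\mathcal D}u,{\mathcal D}v)_{{\cal H}_0}+b(u,v)-(\epsilon_\ell u,v)_{{\cal H}_0}$. For $\ell=1,2$ there exist $C_{{\rm G1},\ell},C_{{\rm G2},\ell}>0$ with $|a_\ell(v,v)+C_{{\rm G2},\ell}\|v\|_{{\cal H}_0}^2|\ge C_{{\rm G1},\ell}\|v\|_{{\cal H}}^2$ for all $v\in{\cal H}$. ${\mathcal A}_\ell:{\cal H}\to{\cal H}^*$ is defined by $\langle{\mathcal A}_\ell u,v\rangle_{{\cal H}^*\times{\cal H}}=a_\ell(u,v)$. For $X\in\{{\cal H}^*,{\cal H}_0\}$, $Y\in\{{\cal H},{\cal H}_0\}$, $\|{\mathcal A}_\ell^{-1}\|_{X\to Y}$ denotes the operator norm of ${\mathcal A}_\ell^{-1}$ restricted to $X$ (using ${\cal H}_0\subset{\cal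 H}^*$) and measured in $Y$. *)

theory Defs
  imports "HOL-Analysis.Analysis"
begin

text \<open>Complex Hilbert spaces are modelled explicitly: an ambient abelian group 'v with
  a complex scalar multiplication sc (a complex vector space), a carrier subspace V,
  and a complex inner product ip on V, linear in the first and conjugate-linear in the
  second argument.\<close>

definition ip_norm :: "('v \<Rightarrow> 'v \<Rightarrow> complex) \<Rightarrow> 'v \<Rightarrow> real" where
  "ip_norm ip x = sqrt (Re (ip x x))"

definition hilbert_space_on ::
  "'v::ab_group_add set \<Rightarrow> (complex \<Rightarrow> 'v \<Rightarrow> 'v) \<Rightarrow> ('v \<Rightarrow> 'v \<Rightarrow> complex) \<Rightarrow> bool" where
  "hilbert_space_on V sc ip \<longleftrightarrow>
     (\<forall>c x y. sc c (x + y) = sc c x + sc c y) \<and>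
     (\<forall>c d x. sc (c + d) x = sc c x + sc d x) \<and>
     (\<forall>c d x. sc c (sc d x) = sc (c * d) x) \<and>
     (\<forall>x. sc 1 x = x) \<and>
     0 \<in> V \<and> (\<forall>x\<in>V. \<forall>y\<in>V. x + y \<in> V) \<and> (\<forall>c. \<forall>x\<in>V. sc c x \<in> V) \<and>
     (\<forall>x\<in>V. \<forall>y\<in>V. \<forall>z\<in>V. ip (x + y) z = ip x z + ip y z) \<and>
     (\<forall>c. \<forall>x\<in>V. \<forall>y\<in>V. ip (sc c x) y = c * ip x y) \<and>
     (\<forall>x\<in>V. \<forall>y\<in>V. ip y x = cnj (ip x y)) \<and>
     (\<forall>x\<in>V. 0 \<le> Re (ip x x)) \<and>
     (\<forall>x\<in>V. ip x x = 0 \<longrightarrow> x = 0) \<and>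
     (\<forall>X::nat \<Rightarrow> 'v. (\<forall>n. X n \<in> V) \<longrightarrow>
          (\<forall>e>0. \<exists>N. \<forall>m\<ge>N. \<forall>n\<ge>N. ip_norm ip (X m - X n) < e) \<longrightarrow>
          (\<exists>l\<in>V. \<forall>e>0. \<exists>N. \<forall>n\<ge>N. ip_norm ip (X n - l) < e))"

definition bounded_clinear_op ::
  "(complex \<Rightarrow> 'v::ab_group_add \<Rightarrow> 'v) \<Rightarrow> ('v \<Rightarrow> 'v \<Rightarrow> complex) \<Rightarrow> ('v \<Rightarrow> 'v) \<Rightarrow> bool" where
  "bounded_clinear_op sc ip T \<longleftrightarrow>
     (\<forall>x y. T (x + y) = T x + T y) \<and> (\<forall>c x. T (sc c x) = sc c (T x)) \<and>
     (\<exists>M. \<forall>x. ip_norm ip (T x) \<le> M * ip_norm ip x)"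

definition bounded_sesquilinear_on ::
  "'v::ab_group_add set \<Rightarrow> (complex \<Rightarrow> 'v \<Rightarrow> 'v) \<Rightarrow> ('v \<Rightarrow> 'v \<Rightarrow> complex)
     \<Rightarrow> ('v \<Rightarrow> 'v \<Rightarrow> complex) \<Rightarrow> bool" where
  "bounded_sesquilinear_on V sc ip b \<longleftrightarrow>
     (\<forall>x\<in>V. \<forall>y\<in>V. \<forall>z\<in>V. b (x + y) z = b x z + b y z) \<and>
     (\<forall>x\<in>V. \<forall>y\<in>V. \<forall>z\<in>V. b x (y + z) = b x y + b x z) \<and>
     (\<forall>c. \<forall>x\<in>V. \<forall>y\<in>V. b (sc c x) y = c * b x y) \<and>
     (\<forall>c. \<forall>x\<in>V. \<forall>y\<in>V. b x (sc c y) = cnj c * b x y) \<and>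
     (\<exists>M. \<forall>x\<in>V. \<forall>y\<in>V. cmod (b x y) \<le> M * ip_norm ip x * ip_norm ip y)"

text \<open>The (anti)dual space H*: bounded conjugate-linear functionals on V, extended by 0
  outside V (so that they are determined by their values on V).  The duality pairing
  is \<langle>\<phi>, v\<rangle> = \<phi> v, conjugate-linear in v, consistent with (f, v)_{H0}.\<close>
definition dual_space ::
  "'v::ab_group_add set \<Rightarrow> (complex \<Rightarrow> 'v \<Rightarrow> 'v) \<Rightarrow> ('v \<Rightarrow> 'v \<Rightarrow> complex) \<Rightarrow> ('v \<Rightarrow> complex) set" where
  "dual_space V sc ip =
     {\<phi>. (\<forall>x\<in>V. \<forall>y\<in>V. \<phi> (x + y) = \<phi> x + \<phi> y) \<and>
         (\<forall>c. \<forall>x\<in>V. \<phi> (sc c x) = cnj c * \<phi> x) \<and>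
         (\<exists>M. \<forall>x\<in>V. cmod (\<phi> x) \<le> M * ip_norm ip x) \<and>
         (\<forall>x. x \<notin> V \<longrightarrow> \<phi> x = 0)}"

definition dual_norm :: "'v::zero set \<Rightarrow> ('v \<Rightarrow> 'v \<Rightarrow> complex) \<Rightarrow> ('v \<Rightarrow> complex) \<Rightarrow> real" where
  "dual_norm V ip \<phi> = Sup (insert 0 {cmod (\<phi> v) / ip_norm ip v | v. v \<in> V \<and> v \<noteq> 0})"

definition emb :: "'v set \<Rightarrow> ('v \<Rightarrow> 'v \<Rightarrow> complex) \<Rightarrow> 'v \<Rightarrow> ('v \<Rightarrow> complex)" where
  "emb V ip0 f = (\<lambda>v. if v \<in> V then ip0 f v else 0)"

definition form_op :: "'v set \<Rightarrow> ('v \<Rightarrow> 'v \<Rightarrow> complex) \<Rightarrow> 'v \<Rightarrow> ('v \<Rightarrow> complex)" where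
  "form_op V a u = (\<lambda>v. if v \<in> V then a u v else 0)"

definition opnorm_star_H ::
  "'v::ab_group_add set \<Rightarrow> (complex \<Rightarrow> 'v \<Rightarrow> 'v) \<Rightarrow> ('v \<Rightarrow> 'v \<Rightarrow> complex)
     \<Rightarrow> (('v \<Rightarrow> complex) \<Rightarrow> 'v) \<Rightarrow> real" where
  "opnorm_star_H V sc ipH Ainv =
     Sup (insert 0 {ip_norm ipH (Ainv \<phi>) / dual_norm V ipH \<phi> | \<phi>. \<phi> \<in> dual_space V sc ipH \<and> \<phi> \<noteq> (\<lambda>_. 0)})"

definition opnorm_0_H ::
  "'v::ab_group_add set \<Rightarrow> ('v \<Rightarrow> 'v \<Rightarrow> complex) \<Rightarrow> ('v \<Rightarrow> 'v \<Rightarrow> complex)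
     \<Rightarrow> (('v \<Rightarrow> complex) \<Rightarrow> 'v) \<Rightarrow> real" where
  "opnorm_0_H V ip0 ipH Ainv =
     Sup (insert 0 {ip_norm ipH (Ainv (emb V ip0 f)) / ip_norm ip0 f | f. f \<noteq> 0})"

definition opnorm_0_0 ::
  "'v::ab_group_add set \<Rightarrow> ('v \<Rightarrow> 'v \<Rightarrow> complex) \<Rightarrow> (('v \<Rightarrow> complex) \<Rightarrow> 'v) \<Rightarrow> real" where
  "opnorm_0_0 V ip0 Ainv =
     Sup (insert 0 {ip_norm ip0 (Ainv (emb V ip0 f)) / ip_norm ip0 f | f. f \<noteq> 0})"

end

theory Submission
  imports Defs
begin


locale hs =
  fixes V :: "'v::ab_group_add set" and sc :: "complex \<Rightarrow> 'v \<Rightarrow> 'v" and ip :: "'v \<Rightarrow> 'v \<Rightarrow> complex"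
  assumes hs: "hilbert_space_on V sc ip"
begin

abbreviation nrm where "nrm x \<equiv> ip_norm ip x"

lemmas hs_unf = hs[unfolded hilbert_space_on_def]

lemma sc_add_r: "sc c (x + y) = sc c x + sc c y" using hs_unf[THEN conjunct1] by blast
lemma sc_add_l: "sc (c + d) x = sc c x + sc d x" using hs_unf[THEN conjunct2, THEN conjunct1] by blast
lemma sc_assoc: "sc c (sc d x) = sc (c * d) x" using hs_unf[THEN conjunct2, THEN conjunct2, THEN conjunct1] by blast
lemma sc_one: "sc 1 x = x" using hs_unf[THEN conjunct2, THEN conjunct2, THEN conjunct2, THEN conjunct1] by blast
lemma zero_V: "0 \<in> V" using hs_unf[THEN conjunct2, THEN conjunct2, THEN conjunct2, THEN conjunct2, THEN conjunct1] by blast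
lemma add_V: "x \<in> V \<Longrightarrow> y \<in> V \<Longrightarrow> x + y \<in> V" using hs_unf[THEN conjunct2, THEN conjunct2, THEN conjunct2, THEN conjunct2, THEN conjunct2, THEN conjunct1] by blast
lemma sc_V: "x \<in> V \<Longrightarrow> sc c x \<in> V" using hs_unf[THEN conjunct2, THEN conjunct2, THEN conjunct2, THEN conjunct2, THEN conjunct2, THEN conjunct2, THEN conjunct1] by blast
lemma ip_add_l: "x \<in> V \<Longrightarrow> y \<in> V \<Longrightarrow> z \<in> V \<Longrightarrow> ip (x + y) z = ip x z + ip y z"
  using hs_unf[THEN conjunct2, THEN conjunct2, THEN conjunct2, THEN conjunct2, THEN conjunct2, THEN conjunct2, THEN conjunct2, THEN conjunct1] by blast
lemma ip_sc_l: "x \<in> V \<Longrightarrow> y \<in> V \<Longrightarrow> ip (sc c x) y = c * ip x y"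
  using hs_unf[THEN conjunct2, THEN conjunct2, THEN conjunct2, THEN conjunct2, THEN conjunct2, THEN conjunct2, THEN conjunct2, THEN conjunct2, THEN conjunct1] by blast
lemma ip_sym: "x \<in> V \<Longrightarrow> y \<in> V \<Longrightarrow> ip y x = cnj (ip x y)"
  using hs_unf[THEN conjunct2, THEN conjunct2, THEN conjunct2, THEN conjunct2, THEN conjunct2, THEN conjunct2, THEN conjunct2, THEN conjunct2, THEN conjunct2, THEN conjunct1] by blast
lemma ip_pos: "x \<in> V \<Longrightarrow> 0 \<le> Re (ip x x)"
  using hs_unf[THEN conjunct2, THEN conjunct2, THEN conjunct2, THEN conjunct2, THEN conjunct2, THEN conjunct2, THEN conjunct2, THEN conjunct2, THEN conjunct2, THEN conjunct2, THEN conjunct1] by blast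
lemma ip_def0: "x \<in> V \<Longrightarrow> ip x x = 0 \<Longrightarrow> x = 0"
  using hs_unf[THEN conjunct2, THEN conjunct2, THEN conjunct2, THEN conjunct2, THEN conjunct2, THEN conjunct2, THEN conjunct2, THEN conjunct2, THEN conjunct2, THEN conjunct2, THEN conjunct2, THEN conjunct1] by blast
lemma complete:
  fixes X :: "nat \<Rightarrow> 'v"
  assumes a: "\<And>n. X n \<in> V" and c: "\<forall>e>0. \<exists>N. \<forall>m\<ge>N. \<forall>n\<ge>N. nrm (X m - X n) < e"
  shows "\<exists>l\<in>V. \<forall>e>0. \<exists>N. \<forall>n\<ge>N. nrm (X n - l) < e"
proof -
  have a': "\<forall>n. X n \<in> V" using a by blast
  have h1: "(\<forall>n. X n \<in> V) \<longrightarrow> (\<forall>e>0. \<exists>N. \<forall>m\<ge>N. \<forall>n\<ge>N. nrm (X m - X n) < e) \<longrightarrow> (\<exists>l\<in>V. \<forall>e>0. \<exists>N. \<forall>n\<ge>N. nrm (X n - l) < e)"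
    using hs_unf[THEN conjunct2, THEN conjunct2, THEN conjunct2, THEN conjunct2, THEN conjunct2, THEN conjunct2, THEN conjunct2, THEN conjunct2, THEN conjunct2, THEN conjunct2, THEN conjunct2, THEN conjunct2] by (rule spec)
  from h1 a' have "(\<forall>e>0. \<exists>N. \<forall>m\<ge>N. \<forall>n\<ge>N. nrm (X m - X n) < e) \<longrightarrow> (\<exists>l\<in>V. \<forall>e>0. \<exists>N. \<forall>n\<ge>N. nrm (X n - l) < e)" by (rule mp)
  from this c show ?thesis by (rule mp)
qed

lemma sc_zero_l: "sc 0 x = 0"
proof -
  have "sc (0+0) x = sc 0 x + sc 0 x" by (rule sc_add_l)
  then show ?thesis by simp
qed
lemma sc_zero_r: "sc c 0 = 0"
proof -
  have "sc c (0+0) = sc c 0 + sc c 0" by (rule sc_add_r)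
  then show ?thesis by simp
qed
lemma sc_neg_l: "sc (- c) x = - sc c x"
proof -
  have "sc (c + - c) x = sc c x + sc (-c) x" by (rule sc_add_l)
  then show ?thesis by (simp add: sc_zero_l eq_neg_iff_add_eq_0 add.commute)
qed
lemma sc_neg_r: "sc c (- x) = - sc c x"
proof -
  have "sc c (x + - x) = sc c x + sc c (-x)" by (rule sc_add_r)
  then show ?thesis by (simp add: sc_zero_r eq_neg_iff_add_eq_0 add.commute)
qed
lemma sc_minus_one: "sc (-1) x = - x" by (simp add: sc_neg_l sc_one)
lemma sc_diff_r: "sc c (x - y) = sc c x - sc c y"
  using sc_add_r[of c x "- y"] by (simp add: sc_neg_r)
lemma sc_diff_l: "sc (c - d) x = sc c x - sc d x"
  using sc_add_l[of c "-d" x] by (simp add: sc_neg_l)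
lemma neg_V: "x \<in> V \<Longrightarrow> - x \<in> V" using sc_V[of x "-1"] by (simp add: sc_minus_one)
lemma diff_V: "x \<in> V \<Longrightarrow> y \<in> V \<Longrightarrow> x - y \<in> V" using add_V[of x "-y"] neg_V by simp

lemma ip_zero_l: "y \<in> V \<Longrightarrow> ip 0 y = 0"
  using ip_add_l[of 0 0 y] zero_V by simp
lemma ip_add_r: "x \<in> V \<Longrightarrow> y \<in> V \<Longrightarrow> z \<in> V \<Longrightarrow> ip x (y + z) = ip x y + ip x z"
proof -
  assume a: "x \<in> V" "y \<in> V" "z \<in> V"
  have "ip x (y + z) = cnj (ip (y + z) x)" using a add_V ip_sym[of "y + z" x] by blast
  also have "\<dots> = cnj (ip y x) + cnj (ip z x)" using a ip_add_l by simp
  also have "\<dots> = ip x y + ip x z" using a ip_sym[of y x] ip_sym[of z x] by simp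
  finally show ?thesis .
qed
lemma ip_sc_r: "x \<in> V \<Longrightarrow> y \<in> V \<Longrightarrow> ip x (sc c y) = cnj c * ip x y"
proof -
  assume a: "x \<in> V" "y \<in> V"
  have "ip x (sc c y) = cnj (ip (sc c y) x)" using a sc_V ip_sym[of "sc c y" x] by blast
  also have "\<dots> = cnj c * cnj (ip y x)" using a ip_sc_l by simp
  also have "\<dots> = cnj c * ip x y" using a ip_sym[of y x] by simp
  finally show ?thesis .
qed
lemma ip_zero_r: "x \<in> V \<Longrightarrow> ip x 0 = 0"
  using ip_add_r[of x 0 0] zero_V by simp
lemma ip_neg_l: "x \<in> V \<Longrightarrow> y \<in> V \<Longrightarrow> ip (- x) y = - ip x y"
  using ip_sc_l[of x y "-1"] by (simp add: sc_minus_one)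
lemma ip_neg_r: "x \<in> V \<Longrightarrow> y \<in> V \<Longrightarrow> ip x (- y) = - ip x y"
  using ip_sc_r[of x y "-1"] by (simp add: sc_minus_one)
lemma ip_diff_l: "x \<in> V \<Longrightarrow> y \<in> V \<Longrightarrow> z \<in> V \<Longrightarrow> ip (x - y) z = ip x z - ip y z"
  using ip_add_l[of x "-y" z] ip_neg_l neg_V by simp
lemma ip_diff_r: "x \<in> V \<Longrightarrow> y \<in> V \<Longrightarrow> z \<in> V \<Longrightarrow> ip x (y - z) = ip x y - ip x z"
  using ip_add_r[of x y "-z"] ip_neg_r neg_V by simp

lemma ip_self_real: "x \<in> V \<Longrightarrow> ip x x = complex_of_real ((nrm x)\<^sup>2)"
proof -
  assume a: "x \<in> V"
  have "ip x x = cnj (ip x x)" using ip_sym[of x x] a by blast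
  from arg_cong[OF this, of Im] have "Im (ip x x) = 0" by simp
  then show ?thesis using ip_pos[OF a] unfolding ip_norm_def by (simp add: complex_eq_iff)
qed
lemma nrm_nonneg: "x \<in> V \<Longrightarrow> nrm x \<ge> 0" unfolding ip_norm_def using ip_pos by simp
lemma nrm_sq: "x \<in> V \<Longrightarrow> (nrm x)\<^sup>2 = Re (ip x x)"
proof -
  assume "x \<in> V"
  then have "0 \<le> Re (ip x x)" by (rule ip_pos)
  then show ?thesis unfolding ip_norm_def by simp
qed
lemma nrm_zero_iff: "x \<in> V \<Longrightarrow> nrm x = 0 \<longleftrightarrow> x = 0"
proof
  assume a: "x \<in> V" "nrm x = 0"
  then have "ip x x = 0" using ip_self_real by simp
  then show "x = 0" using ip_def0 a by blast
next
  assume "x \<in> V" "x = 0" then show "nrm x = 0" using ip_zero_l zero_V unfolding ip_norm_def by simp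
qed
lemma nrm_zero[simp]: "nrm 0 = 0" using nrm_zero_iff zero_V by blast
lemma nrm_sc: "x \<in> V \<Longrightarrow> nrm (sc c x) = cmod c * nrm x"
proof -
  assume a: "x \<in> V"
  have "ip (sc c x) (sc c x) = c * cnj c * ip x x" using a sc_V ip_sc_l ip_sc_r by simp
  also have "c * cnj c = complex_of_real ((cmod c)\<^sup>2)" by (rule complex_norm_square[symmetric])
  finally have "Re (ip (sc c x) (sc c x)) = (cmod c)\<^sup>2 * Re (ip x x)"
    by simp
  then show ?thesis unfolding ip_norm_def by (simp add: real_sqrt_mult)
qed
lemma nrm_neg: "x \<in> V \<Longrightarrow> nrm (- x) = nrm x"
  using nrm_sc[of x "-1"] by (simp add: sc_minus_one)
lemma nrm_commute: "x \<in> V \<Longrightarrow> y \<in> V \<Longrightarrow> nrm (x - y) = nrm (y - x)"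
  using nrm_neg[of "y - x"] diff_V by simp

lemma nrm_add_sq: "x \<in> V \<Longrightarrow> y \<in> V \<Longrightarrow> (nrm (x + y))\<^sup>2 = (nrm x)\<^sup>2 + (nrm y)\<^sup>2 + 2 * Re (ip x y)"
proof -
  assume a: "x \<in> V" "y \<in> V"
  have "ip (x+y) (x+y) = ip x x + ip x y + ip y x + ip y y"
    using a add_V ip_add_l ip_add_r by simp
  moreover have "Re (ip y x) = Re (ip x y)" using ip_sym[of x y] a by simp
  ultimately show ?thesis using a add_V nrm_sq by simp
qed
lemma nrm_diff_sq: "x \<in> V \<Longrightarrow> y \<in> V \<Longrightarrow> (nrm (x - y))\<^sup>2 = (nrm x)\<^sup>2 + (nrm y)\<^sup>2 - 2 * Re (ip x y)"
  using nrm_add_sq[of x "-y"] neg_V nrm_neg ip_neg_r by simp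

lemma cauchy_schwarz: "x \<in> V \<Longrightarrow> y \<in> V \<Longrightarrow> cmod (ip x y) \<le> nrm x * nrm y"
proof -
  assume a: "x \<in> V" "y \<in> V"
  show ?thesis
  proof (cases "y = 0")
    case True then show ?thesis using a ip_zero_r by simp
  next
    case False
    then have ny: "nrm y > 0" using nrm_zero_iff a nrm_nonneg by (metis less_eq_real_def)
    define t where "t = ip x y / complex_of_real ((nrm y)\<^sup>2)"
    have "0 \<le> (nrm (x - sc t y))\<^sup>2" by simp
    also have "\<dots> = (nrm x)\<^sup>2 + (cmod t * nrm y)\<^sup>2 - 2 * Re (ip x (sc t y))"
      using nrm_diff_sq a sc_V nrm_sc by simp
    also have "ip x (sc t y) = cnj t * ip x y" using ip_sc_r a by simp
    also have "cnj t * ip x y = (ip x y * cnj (ip x y)) / complex_of_real ((nrm y)\<^sup>2)"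
      unfolding t_def by simp
    also have "ip x y * cnj (ip x y) = complex_of_real ((cmod (ip x y))\<^sup>2)"
      by (rule complex_norm_square[symmetric])
    also have "complex_of_real ((cmod (ip x y))\<^sup>2) / complex_of_real ((nrm y)\<^sup>2)
        = complex_of_real ((cmod (ip x y))\<^sup>2 / (nrm y)\<^sup>2)" by simp
    also have "(cmod t * nrm y)\<^sup>2 = (cmod (ip x y))\<^sup>2 / (nrm y)\<^sup>2"
    proof -
      have "cmod t = cmod (ip x y) / (nrm y)\<^sup>2" unfolding t_def by (simp add: norm_divide norm_power)
      then show ?thesis using ny by (simp add: power_divide field_simps power2_eq_square)
    qed
    finally have "0 \<le> (nrm x)\<^sup>2 - (cmod (ip x y))\<^sup>2 / (nrm y)\<^sup>2" by simp
    then have "(cmod (ip x y))\<^sup>2 \<le> (nrm x * nrm y)\<^sup>2" using ny by (simp add: field_simps power_mult_distrib)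
    moreover have "0 \<le> nrm x * nrm y" using nrm_nonneg a by simp
    ultimately show ?thesis by (rule power2_le_imp_le)
  qed
qed

lemma nrm_triangle: "x \<in> V \<Longrightarrow> y \<in> V \<Longrightarrow> nrm (x + y) \<le> nrm x + nrm y"
proof -
  assume a: "x \<in> V" "y \<in> V"
  have "Re (ip x y) \<le> nrm x * nrm y" using cauchy_schwarz[OF a] complex_Re_le_cmod order_trans by blast
  then have "(nrm (x + y))\<^sup>2 \<le> (nrm x + nrm y)\<^sup>2" using nrm_add_sq[OF a] by (simp add: power2_sum)
  moreover have "0 \<le> nrm x + nrm y" using nrm_nonneg a by simp
  ultimately show ?thesis by (rule power2_le_imp_le)
qed
lemma nrm_triangle_diff: "x \<in> V \<Longrightarrow> y \<in> V \<Longrightarrow> z \<in> V \<Longrightarrow> nrm (x - z) \<le> nrm (x - y) + nrm (y - z)"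
  using nrm_triangle[of "x - y" "y - z"] diff_V by simp

lemma parallelogram: "x \<in> V \<Longrightarrow> y \<in> V \<Longrightarrow> (nrm (x + y))\<^sup>2 + (nrm (x - y))\<^sup>2 = 2 * (nrm x)\<^sup>2 + 2 * (nrm y)\<^sup>2"
  using nrm_add_sq nrm_diff_sq by simp

end


context hs begin

lemma sc_two: "sc 2 x = x + x"
  using sc_add_l[of 1 1 x] by (simp add: sc_one)

lemma nrm_pos: "x \<in> V \<Longrightarrow> x \<noteq> 0 \<Longrightarrow> nrm x > 0"
  using nrm_zero_iff nrm_nonneg by (metis less_eq_real_def)

lemma projection:
  assumes MV: "M \<subseteq> V" and M0: "0 \<in> M" and Madd: "\<And>x y. x \<in> M \<Longrightarrow> y \<in> M \<Longrightarrow> x + y \<in> M"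
    and Msc: "\<And>c x. x \<in> M \<Longrightarrow> sc c x \<in> M"
    and closed: "\<And>(X::nat \<Rightarrow> 'v) l. (\<And>k. X k \<in> M) \<Longrightarrow> l \<in> V \<Longrightarrow> (\<forall>e>0. \<exists>N. \<forall>k\<ge>N. nrm (X k - l) < e) \<Longrightarrow> l \<in> M"
    and x: "x \<in> V"
  shows "\<exists>m\<in>M. \<forall>p\<in>M. ip (x - m) p = 0"
proof -
  note diffV = diff_V
  define D where "D = {nrm (x - m) | m. m \<in> M}"
  define d where "d = Inf D"
  have Dne: "D \<noteq> {}" using M0 unfolding D_def by blast
  have Dpos: "\<forall>z\<in>D. 0 \<le> z" unfolding D_def using MV x diff_V nrm_nonneg by blast
  then have Dbd: "bdd_below D" unfolding bdd_below_def by blast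
  have dle: "\<And>m. m \<in> M \<Longrightarrow> d \<le> nrm (x - m)"
    unfolding d_def using Dbd by (intro cInf_lower) (auto simp: D_def)
  have d0: "0 \<le> d" unfolding d_def using Dpos by (intro cInf_greatest[OF Dne]) auto
  have "\<forall>k. \<exists>m. m \<in> M \<and> nrm (x - m) < d + 1 / real (Suc k)"
  proof
    fix k
    have "Inf D < d + 1 / real (Suc k)" unfolding d_def by simp
    then obtain z where "z \<in> D" "z < d + 1 / real (Suc k)" using cInf_lessD[OF Dne] by blast
    then show "\<exists>m. m \<in> M \<and> nrm (x - m) < d + 1 / real (Suc k)" unfolding D_def by blast
  qed
  from choice[OF this] obtain X where X: "\<forall>k. X k \<in> M \<and> nrm (x - X k) < d + 1 / real (Suc k)"
    by blast
  then have XM: "\<And>k. X k \<in> M" and Xd: "\<And>k. nrm (x - X k) < d + 1 / real (Suc k)" by auto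
  have XV: "\<And>k. X k \<in> V" using XM MV by blast
  have sqb: "(nrm (x - X k))\<^sup>2 \<le> d\<^sup>2 + (2*d+1) * (1 / real (Suc k))" for k
  proof -
    define ek where "ek = 1 / real (Suc k)"
    have ek: "0 < ek" "ek \<le> 1" unfolding ek_def by auto
    have "0 \<le> nrm (x - X k)" using nrm_nonneg diff_V x XV by blast
    then have "(nrm (x - X k))\<^sup>2 \<le> (d + ek)\<^sup>2" using Xd[of k]
      unfolding ek_def by (intro power_mono) auto
    also have "\<dots> = d\<^sup>2 + 2*d*ek + ek*ek" by (simp add: power2_eq_square algebra_simps)
    also have "\<dots> \<le> d\<^sup>2 + (2*d+1) * ek" using ek by (simp add: algebra_simps mult_left_le)
    finally show ?thesis unfolding ek_def .
  qed
  have cb: "(nrm (X j - X k))\<^sup>2 \<le> 2*(2*d+1) * (1 / real (Suc j) + 1 / real (Suc k))" for j k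
  proof -
    define a where "a = x - X j"
    define b where "b = x - X k"
    have aV: "a \<in> V" and bV: "b \<in> V" unfolding a_def b_def using x XV diff_V by auto
    define mid where "mid = sc (1/2) (X j + X k)"
    have midM: "mid \<in> M" unfolding mid_def using XM Madd Msc by blast
    have "sc 2 (x - mid) = x + x - sc 1 (X j + X k)"
      unfolding mid_def by (simp add: sc_diff_r sc_assoc sc_two)
    then have abeq: "a + b = sc 2 (x - mid)" unfolding a_def b_def by (simp add: sc_one)
    have "nrm (a + b) = 2 * nrm (x - mid)" unfolding abeq
      using nrm_sc[of "x - mid" 2] x midM MV diff_V by auto
    then have "nrm (a + b) \<ge> 2 * d" using dle[OF midM] by simp
    then have "(2 * d)\<^sup>2 \<le> (nrm (a + b))\<^sup>2" using d0 by (intro power_mono) auto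
    then have ab2: "(nrm (a + b))\<^sup>2 \<ge> 4 * d\<^sup>2" by (simp add: power_mult_distrib)
    have "a - b = X k - X j" unfolding a_def b_def by simp
    then have "(nrm (a - b))\<^sup>2 = (nrm (X j - X k))\<^sup>2" using nrm_commute XV by simp
    moreover have "(nrm (a + b))\<^sup>2 + (nrm (a - b))\<^sup>2 = 2 * (nrm a)\<^sup>2 + 2 * (nrm b)\<^sup>2"
      using parallelogram aV bV by simp
    moreover have "2*(2*d+1) * (1 / real (Suc j) + 1 / real (Suc k)) = 2*((2*d+1) * (1 / real (Suc j))) + 2*((2*d+1) * (1 / real (Suc k)))"
      by (simp add: algebra_simps)
    ultimately show ?thesis using ab2 sqb[of j] sqb[of k] unfolding a_def b_def
      by linarith
  qed
  have cauchy: "\<forall>e>0. \<exists>N. \<forall>m\<ge>N. \<forall>n\<ge>N. nrm (X m - X n) < e"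
  proof (intro allI impI)
    fix e :: real assume e: "e > 0"
    obtain N :: nat where N: "4*(2*d+1) / e\<^sup>2 < real N" using reals_Archimedean2 by blast
    have "0 \<le> 4*(2*d+1) / e\<^sup>2" using d0 by simp
    then have Npos: "real N > 0" using N by linarith
    show "\<exists>N. \<forall>m\<ge>N. \<forall>n\<ge>N. nrm (X m - X n) < e"
    proof (intro exI allI impI)
      fix m n assume mn: "N \<le> m" "N \<le> n"
      have "1 / real (Suc m) \<le> 1 / real N" using mn Npos by (intro divide_left_mono) auto
      moreover have "1 / real (Suc n) \<le> 1 / real N" using mn Npos by (intro divide_left_mono) auto
      ultimately have "2*(2*d+1) * (1 / real (Suc m) + 1 / real (Suc n)) \<le> 2*(2*d+1) * (2 / real N)"
        using d0 by (intro mult_left_mono) auto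
      also have "\<dots> = 4*(2*d+1) / real N" by simp
      also have "\<dots> < e\<^sup>2"
      proof -
        have "4*(2*d+1) < real N * e\<^sup>2" using N e by (simp add: divide_less_eq)
        then have h: "4*(2*d+1) < e\<^sup>2 * real N" by (simp only: mult.commute)
        show ?thesis by (rule pos_divide_less_eq[OF Npos, THEN iffD2, OF h])
      qed
      finally have "(nrm (X m - X n))\<^sup>2 < e\<^sup>2" using cb[of m n] by linarith
      then show "nrm (X m - X n) < e" by (rule power2_less_imp_less[OF _ less_imp_le[OF e]])
    qed
  qed
  obtain l where lV: "l \<in> V" and lim: "\<forall>e>0. \<exists>N. \<forall>n\<ge>N. nrm (X n - l) < e"
    using complete[OF XV cauchy] by blast
  have lM: "l \<in> M" using closed[OF XM lV lim] .
  have lmin: "nrm (x - l) \<le> d"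
  proof (rule field_le_epsilon)
    fix e :: real assume e: "0 < e"
    have "e/2 > 0" using e by simp
    with lim have "\<exists>N. \<forall>n\<ge>N. nrm (X n - l) < e/2" by blast
    then obtain N1 where N1: "\<forall>n\<ge>N1. nrm (X n - l) < e/2" by blast
    obtain N2 :: nat where N2: "2 / e < real N2" using reals_Archimedean2 by blast
    define k where "k = max N1 N2"
    have k1: "nrm (X k - l) < e/2" using N1 unfolding k_def by simp
    have "2 / e < real (Suc k)" using N2 unfolding k_def by linarith
    then have "2 < real (Suc k) * e" by (simp add: pos_divide_less_eq[OF e])
    then have k2: "1 / real (Suc k) < e / 2" by (simp add: field_simps)
    have "nrm (x - l) \<le> nrm (x - X k) + nrm (X k - l)"
      using nrm_triangle_diff x XV lV by blast
    then show "nrm (x - l) \<le> d + e" using Xd[of k] k1 k2 by linarith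
  qed
  have orth: "ip (x - l) p = 0" if pM: "p \<in> M" for p
  proof (rule ccontr)
    assume qn: "ip (x - l) p \<noteq> 0"
    define q where "q = ip (x - l) p"
    define s where "s = 1 / ((nrm p)\<^sup>2 + 1)"
    have pV: "p \<in> V" using pM MV by blast
    have elV: "x - l \<in> V" using x lV diff_V by blast
    have np: "0 \<le> (nrm p)\<^sup>2" by simp
    then have np1: "0 < (nrm p)\<^sup>2 + 1" by linarith
    have s: "s > 0" "s * (nrm p)\<^sup>2 < 1" unfolding s_def using np1
      by (simp_all add: divide_less_eq)
    define z where "z = l + sc (complex_of_real s * q) p"
    have zM: "z \<in> M" unfolding z_def using lM pM Madd Msc by blast
    have "nrm (x - l) \<le> nrm (x - z)" using lmin dle[OF zM] by simp
    then have le: "(nrm (x - l))\<^sup>2 \<le> (nrm (x - z))\<^sup>2" using nrm_nonneg[OF elV] by (intro power_mono) auto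
    have xz: "x - z = (x - l) - sc (complex_of_real s * q) p" unfolding z_def by simp
    have "(nrm (x - z))\<^sup>2 = (nrm (x - l))\<^sup>2 + (cmod (complex_of_real s * q) * nrm p)\<^sup>2
           - 2 * Re (ip (x - l) (sc (complex_of_real s * q) p))"
      unfolding xz using nrm_diff_sq[OF elV sc_V[OF pV]] nrm_sc[OF pV] by simp
    also have "ip (x - l) (sc (complex_of_real s * q) p) = complex_of_real s * cnj q * q"
      using ip_sc_r[OF elV pV] unfolding q_def by simp
    also have "Re (complex_of_real s * cnj q * q) = s * (cmod q)\<^sup>2"
    proof -
      have cq: "q * cnj q = complex_of_real ((cmod q)\<^sup>2)" by (rule complex_norm_square[symmetric])
      have "complex_of_real s * cnj q * q = complex_of_real s * (q * cnj q)" by (simp add: algebra_simps)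
      also have "\<dots> = complex_of_real (s * (cmod q)\<^sup>2)" unfolding cq by simp
      finally have "complex_of_real s * cnj q * q = complex_of_real (s * (cmod q)\<^sup>2)" .
      from arg_cong[OF this, of Re] show ?thesis by (simp only: Re_complex_of_real)
    qed
    also have "cmod (complex_of_real s * q) = s * cmod q" using s by (simp add: norm_mult)
    finally have "(nrm (x - z))\<^sup>2 = (nrm (x - l))\<^sup>2 + (cmod q)\<^sup>2 * s * (s * (nrm p)\<^sup>2 - 2)"
      by (simp add: algebra_simps power2_eq_square)
    moreover have "(cmod q)\<^sup>2 * s * (s * (nrm p)\<^sup>2 - 2) < 0"
    proof (rule mult_pos_neg)
      have "cmod q > 0" using qn unfolding q_def by simp
      then show "0 < (cmod q)\<^sup>2 * s" using s by simp
      show "s * (nrm p)\<^sup>2 - 2 < 0" using s by linarith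
    qed
    ultimately show False using le by linarith
  qed
  show ?thesis using lM orth by blast
qed

end


context hs begin

lemma dual_facts:
  assumes "\<phi> \<in> dual_space V sc ip"
  shows dual_add: "\<And>x y. x \<in> V \<Longrightarrow> y \<in> V \<Longrightarrow> \<phi> (x + y) = \<phi> x + \<phi> y"
    and dual_sc: "\<And>c x. x \<in> V \<Longrightarrow> \<phi> (sc c x) = cnj c * \<phi> x"
    and dual_bd: "\<exists>M. \<forall>x\<in>V. cmod (\<phi> x) \<le> M * nrm x"
    and dual_out: "\<And>x. x \<notin> V \<Longrightarrow> \<phi> x = 0"
  using assms unfolding dual_space_def by blast+

lemma dual_zero: "\<phi> \<in> dual_space V sc ip \<Longrightarrow> \<phi> 0 = 0"
  using dual_sc[of \<phi> 0 0] zero_V by (simp add: sc_zero_l)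

lemma dual_neg: "\<phi> \<in> dual_space V sc ip \<Longrightarrow> x \<in> V \<Longrightarrow> \<phi> (- x) = - \<phi> x"
  using dual_sc[of \<phi> x "-1"] by (simp add: sc_minus_one)

lemma dual_diff: "\<phi> \<in> dual_space V sc ip \<Longrightarrow> x \<in> V \<Longrightarrow> y \<in> V \<Longrightarrow> \<phi> (x - y) = \<phi> x - \<phi> y"
  using dual_add[of \<phi> x "- y"] dual_neg[of \<phi> y] neg_V[of y] by simp

lemma dual_set_bdd:
  assumes "\<phi> \<in> dual_space V sc ip"
  shows "bdd_above (insert 0 {cmod (\<phi> v) / nrm v | v. v \<in> V \<and> v \<noteq> 0})"
proof -
  obtain M where M: "\<forall>x\<in>V. cmod (\<phi> x) \<le> M * nrm x" using dual_bd[OF assms] by blast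
  have "\<forall>z \<in> insert 0 {cmod (\<phi> v) / nrm v | v. v \<in> V \<and> v \<noteq> 0}. z \<le> max 0 M"
  proof
    fix z assume "z \<in> insert 0 {cmod (\<phi> v) / nrm v | v. v \<in> V \<and> v \<noteq> 0}"
    then consider "z = 0" | v where "v \<in> V" "v \<noteq> 0" "z = cmod (\<phi> v) / nrm v" by blast
    then show "z \<le> max 0 M"
    proof cases
      case 1 then show ?thesis by simp
    next
      case 2
      have "nrm v > 0" using nrm_pos 2 by blast
      then have "z \<le> M" using M 2 by (simp add: pos_divide_le_eq)
      then show ?thesis by simp
    qed
  qed
  then show ?thesis unfolding bdd_above_def by blast
qed

lemma dual_norm_nonneg: "\<phi> \<in> dual_space V sc ip \<Longrightarrow> 0 \<le> dual_norm V ip \<phi>"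
  unfolding dual_norm_def by (rule cSup_upper[OF insertI1 dual_set_bdd])

lemma dual_le:
  assumes \<phi>: "\<phi> \<in> dual_space V sc ip" and v: "v \<in> V"
  shows "cmod (\<phi> v) \<le> dual_norm V ip \<phi> * nrm v"
proof (cases "v = 0")
  case True then show ?thesis using dual_zero[OF \<phi>] by simp
next
  case False
  have pos: "nrm v > 0" using nrm_pos v False by blast
  have "cmod (\<phi> v) / nrm v \<le> dual_norm V ip \<phi>"
    unfolding dual_norm_def using v False by (intro cSup_upper[OF _ dual_set_bdd[OF \<phi>]]) blast
  then show ?thesis using pos by (simp add: pos_divide_le_eq)
qed

lemma dual_norm_le:
  assumes K: "\<forall>v\<in>V. cmod (\<phi> v) \<le> K * nrm v" and K0: "0 \<le> K"
  shows "dual_norm V ip \<phi> \<le> K"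
  unfolding dual_norm_def
proof (rule cSup_least)
  show "insert 0 {cmod (\<phi> v) / nrm v | v. v \<in> V \<and> v \<noteq> 0} \<noteq> {}" by blast
  fix z assume "z \<in> insert 0 {cmod (\<phi> v) / nrm v | v. v \<in> V \<and> v \<noteq> 0}"
  then consider "z = 0" | v where "v \<in> V" "v \<noteq> 0" "z = cmod (\<phi> v) / nrm v" by blast
  then show "z \<le> K"
  proof cases
    case 1 then show ?thesis using K0 by simp
  next
    case 2
    have "nrm v > 0" using nrm_pos 2 by blast
    then show ?thesis using K 2 by (simp add: pos_divide_le_eq)
  qed
qed

lemma dual_norm_pos:
  assumes \<phi>: "\<phi> \<in> dual_space V sc ip" and ne: "\<phi> \<noteq> (\<lambda>_. 0)"
  shows "dual_norm V ip \<phi> > 0"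
proof -
  obtain x where x: "\<phi> x \<noteq> 0" using ne by blast
  have xV: "x \<in> V" using x dual_out[OF \<phi>] by blast
  have x0: "x \<noteq> 0" using x dual_zero[OF \<phi>] by blast
  have pos: "nrm x > 0" using nrm_pos xV x0 by blast
  have "0 < cmod (\<phi> x) / nrm x" using pos x by simp
  also have "cmod (\<phi> x) / nrm x \<le> dual_norm V ip \<phi>"
    unfolding dual_norm_def using xV x0 by (intro cSup_upper[OF _ dual_set_bdd[OF \<phi>]]) blast
  finally show ?thesis .
qed

lemma riesz:
  assumes \<phi>: "\<phi> \<in> dual_space V sc ip"
  shows "\<exists>r\<in>V. \<forall>v\<in>V. \<phi> v = ip r v"
proof -
  define K where "K = {v \<in> V. \<phi> v = 0}"
  show ?thesis
  proof (cases "K = V")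
    case True
    have "\<phi> v = ip 0 v" if "v \<in> V" for v
    proof -
      have "v \<in> K" using True that by simp
      then have "\<phi> v = 0" unfolding K_def by simp
      then show ?thesis using ip_zero_l[OF that] by simp
    qed
    then show ?thesis using zero_V by blast
  next
    case False
    then obtain x where xV: "x \<in> V" and x: "\<phi> x \<noteq> 0" unfolding K_def by blast
    have KV: "K \<subseteq> V" unfolding K_def by blast
    have K0: "0 \<in> K" unfolding K_def using zero_V dual_zero[OF \<phi>] by blast
    have Kadd: "\<And>a b. a \<in> K \<Longrightarrow> b \<in> K \<Longrightarrow> a + b \<in> K"
      unfolding K_def using add_V dual_add[OF \<phi>] by simp
    have Ksc: "\<And>c a. a \<in> K \<Longrightarrow> sc c a \<in> K"
      unfolding K_def using sc_V dual_sc[OF \<phi>] by simp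
    have Kcl: "l \<in> K" if XK: "\<And>k. X k \<in> K" and lV: "l \<in> V"
        and lim: "\<forall>e>0. \<exists>N. \<forall>k\<ge>N. nrm (X k - l) < e" for X :: "nat \<Rightarrow> 'v" and l
    proof -
      define dn where "dn = dual_norm V ip \<phi>"
      have dn0: "0 \<le> dn" unfolding dn_def by (rule dual_norm_nonneg[OF \<phi>])
      have XV: "X k \<in> V" for k using XK KV by blast
      have "cmod (\<phi> l) \<le> 0"
      proof (rule field_le_epsilon)
        fix e :: real assume e: "0 < e"
        have "e / (dn + 1) > 0" using e dn0 by simp
        with lim obtain N where N: "\<forall>k\<ge>N. nrm (X k - l) < e / (dn + 1)" by blast
        have "\<phi> l = \<phi> (l - X N)" using dual_diff[OF \<phi> lV XV[of N]] XK[of N] unfolding K_def by simp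
        moreover have "cmod (\<phi> (l - X N)) \<le> dn * nrm (l - X N)" unfolding dn_def
          by (rule dual_le[OF \<phi> diff_V[OF lV XV[of N]]])
        ultimately have "cmod (\<phi> l) \<le> dn * nrm (l - X N)" by simp
        also have "nrm (l - X N) = nrm (X N - l)" using nrm_commute lV XV by blast
        also have "dn * nrm (X N - l) \<le> dn * (e / (dn + 1))"
          using N dn0 by (intro mult_left_mono) auto
        also have "dn * (e / (dn + 1)) \<le> e" using dn0 e by (simp add: field_simps)
        finally show "cmod (\<phi> l) \<le> 0 + e" by simp
      qed
      then show ?thesis unfolding K_def using lV by simp
    qed
    have ex: "\<exists>m\<in>K. \<forall>p\<in>K. ip (x - m) p = 0"
    proof (rule projection)
      show "K \<subseteq> V" by (rule KV)
      show "0 \<in> K" by (rule K0)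
      show "\<And>a b. a \<in> K \<Longrightarrow> b \<in> K \<Longrightarrow> a + b \<in> K" by (rule Kadd)
      show "\<And>c a. a \<in> K \<Longrightarrow> sc c a \<in> K" by (rule Ksc)
      show "x \<in> V" by (rule xV)
      fix X :: "nat \<Rightarrow> 'v" and l assume a1: "\<And>k. X k \<in> K" and a2: "l \<in> V"
        and a3: "\<forall>e>0. \<exists>N. \<forall>k\<ge>N. nrm (X k - l) < e"
      show "l \<in> K" using Kcl[OF a1 a2 a3] .
    qed
    then obtain m where mK: "m \<in> K" and orth: "\<forall>p\<in>K. ip (x - m) p = 0" by blast
    define y where "y = x - m"
    have mV: "m \<in> V" using mK KV by blast
    have yV: "y \<in> V" unfolding y_def using xV mV diff_V by blast
    have \<phi>y: "\<phi> y = \<phi> x" unfolding y_def using dual_diff[OF \<phi> xV mV] mK unfolding K_def by simp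
    have y0: "y \<noteq> 0" using \<phi>y x dual_zero[OF \<phi>] by auto
    have ny: "nrm y > 0" using nrm_pos yV y0 by blast
    define r where "r = sc (\<phi> y / complex_of_real ((nrm y)\<^sup>2)) y"
    have rV: "r \<in> V" unfolding r_def using sc_V yV by blast
    have "\<phi> v = ip r v" if vV: "v \<in> V" for v
    proof -
      define c where "c = cnj (\<phi> v / \<phi> y)"
      define p where "p = v - sc c y"
      have pV: "p \<in> V" unfolding p_def using vV yV sc_V diff_V by blast
      have "\<phi> p = \<phi> v - cnj c * \<phi> y" unfolding p_def using dual_diff[OF \<phi> vV sc_V[OF yV]] dual_sc[OF \<phi> yV] by simp
      also have "\<dots> = 0" unfolding c_def using x \<phi>y by simp
      finally have "p \<in> K" unfolding K_def using pV by simp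
      then have "ip y p = 0" using orth unfolding y_def by blast
      moreover have "ip y p = ip y v - cnj c * ip y y" unfolding p_def
        using ip_diff_r[OF yV vV sc_V[OF yV]] ip_sc_r[OF yV yV] by simp
      ultimately have "ip y v = cnj c * ip y y" by simp
      also have "\<dots> = \<phi> v / \<phi> y * complex_of_real ((nrm y)\<^sup>2)" unfolding c_def using ip_self_real[OF yV] by simp
      finally have iv: "ip y v = \<phi> v / \<phi> y * complex_of_real ((nrm y)\<^sup>2)" .
      have "ip r v = \<phi> y / complex_of_real ((nrm y)\<^sup>2) * ip y v" unfolding r_def using ip_sc_l[OF yV vV] by simp
      also have "\<dots> = \<phi> v" unfolding iv using ny x \<phi>y by (simp add: field_simps)
      finally show ?thesis by simp
    qed
    then show ?thesis using rV by blast
  qed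
qed

end


context hs begin

lemma sesq_facts:
  assumes "bounded_sesquilinear_on V sc ip t"
  shows ses_add1: "\<And>x y z. x \<in> V \<Longrightarrow> y \<in> V \<Longrightarrow> z \<in> V \<Longrightarrow> t (x + y) z = t x z + t y z"
    and ses_add2: "\<And>x y z. x \<in> V \<Longrightarrow> y \<in> V \<Longrightarrow> z \<in> V \<Longrightarrow> t x (y + z) = t x y + t x z"
    and ses_sc1: "\<And>c x y. x \<in> V \<Longrightarrow> y \<in> V \<Longrightarrow> t (sc c x) y = c * t x y"
    and ses_sc2: "\<And>c x y. x \<in> V \<Longrightarrow> y \<in> V \<Longrightarrow> t x (sc c y) = cnj c * t x y"
    and ses_bd: "\<exists>M. \<forall>x\<in>V. \<forall>y\<in>V. cmod (t x y) \<le> M * nrm x * nrm y"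
  using assms unfolding bounded_sesquilinear_on_def by blast+

lemma form_dual:
  assumes t: "bounded_sesquilinear_on V sc ip t" and w: "w \<in> V"
  shows "form_op V t w \<in> dual_space V sc ip"
proof -
  obtain M where M: "\<forall>x\<in>V. \<forall>y\<in>V. cmod (t x y) \<le> M * nrm x * nrm y" using ses_bd[OF t] by blast
  have "\<forall>x\<in>V. cmod (form_op V t w x) \<le> (M * nrm w) * nrm x"
    unfolding form_op_def using M w by simp
  then show ?thesis unfolding dual_space_def form_op_def
    using ses_add2[OF t w] ses_sc2[OF t w] add_V sc_V by auto
qed

lemma rep_unique:
  assumes r1: "r1 \<in> V" and r2: "r2 \<in> V" and eq: "\<And>v. v \<in> V \<Longrightarrow> ip r1 v = ip r2 v"
  shows "r1 = r2"
proof -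
  have dV: "r1 - r2 \<in> V" using r1 r2 diff_V by blast
  have "ip (r1 - r2) (r1 - r2) = ip r1 (r1 - r2) - ip r2 (r1 - r2)" by (rule ip_diff_l[OF r1 r2 dV])
  also have "\<dots> = 0" using eq[OF dV] by simp
  finally have "r1 - r2 = 0" using ip_def0[OF dV] by blast
  then show ?thesis by simp
qed

lemma lax_milgram:
  assumes t: "bounded_sesquilinear_on V sc ip t" and C: "C > 0"
    and gard: "\<And>w. w \<in> V \<Longrightarrow> C * (nrm w)\<^sup>2 \<le> cmod (t w w)"
    and \<phi>: "\<phi> \<in> dual_space V sc ip"
  shows "\<exists>w\<in>V. \<forall>v\<in>V. t w v = \<phi> v"
proof -
  obtain Mt where Mt: "\<forall>x\<in>V. \<forall>y\<in>V. cmod (t x y) \<le> Mt * nrm x * nrm y" using ses_bd[OF t] by blast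
  define M where "M = \<bar>Mt\<bar>"
  have M0: "0 \<le> M" unfolding M_def by simp
  have MtM: "cmod (t x y) \<le> M * nrm x * nrm y" if "x \<in> V" "y \<in> V" for x y
  proof -
    have "Mt * nrm x * nrm y \<le> M * nrm x * nrm y" unfolding M_def
      using nrm_nonneg that by (intro mult_right_mono) auto
    then show ?thesis using Mt that by fastforce
  qed
  have rep: "\<exists>r. r \<in> V \<and> (\<forall>v\<in>V. t w v = ip r v)" if w: "w \<in> V" for w
  proof -
    obtain r where rV: "r \<in> V" and r: "\<forall>v\<in>V. form_op V t w v = ip r v"
      using riesz[OF form_dual[OF t w]] by blast
    have "\<forall>v\<in>V. t w v = ip r v" using r unfolding form_op_def by simp
    then show ?thesis using rV by blast
  qed
  define B where "B w = (SOME r. r \<in> V \<and> (\<forall>v\<in>V. t w v = ip r v))" for w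
  have Bspec: "B w \<in> V \<and> (\<forall>v\<in>V. t w v = ip (B w) v)" if "w \<in> V" for w
    unfolding B_def using someI_ex[OF rep[OF that]] .
  have BV: "B w \<in> V" if "w \<in> V" for w using Bspec[OF that] by blast
  have Bt: "t w v = ip (B w) v" if "w \<in> V" "v \<in> V" for w v using Bspec[OF that(1)] that(2) by blast
  have Badd: "B (x + y) = B x + B y" if x: "x \<in> V" and y: "y \<in> V" for x y
  proof (rule rep_unique)
    show "B (x + y) \<in> V" using BV add_V x y by blast
    show "B x + B y \<in> V" using BV add_V x y by blast
    fix v assume v: "v \<in> V"
    have "ip (B (x + y)) v = t (x + y) v" using Bt[OF add_V[OF x y] v] by simp
    also have "\<dots> = t x v + t y v" by (rule ses_add1[OF t x y v])
    also have "\<dots> = ip (B x) v + ip (B y) v" using Bt[OF x v] Bt[OF y v] by simp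
    also have "\<dots> = ip (B x + B y) v" using ip_add_l[OF BV[OF x] BV[OF y] v] by simp
    finally show "ip (B (x + y)) v = ip (B x + B y) v" .
  qed
  have Bsc: "B (sc c x) = sc c (B x)" if x: "x \<in> V" for c x
  proof (rule rep_unique)
    show "B (sc c x) \<in> V" using BV sc_V x by blast
    show "sc c (B x) \<in> V" using BV sc_V x by blast
    fix v assume v: "v \<in> V"
    have "ip (B (sc c x)) v = t (sc c x) v" using Bt[OF sc_V[OF x] v] by simp
    also have "\<dots> = c * t x v" by (rule ses_sc1[OF t x v])
    also have "\<dots> = ip (sc c (B x)) v" using ip_sc_l[OF BV[OF x] v] Bt[OF x v] by simp
    finally show "ip (B (sc c x)) v = ip (sc c (B x)) v" .
  qed
  have Bdiff: "B (x - y) = B x - B y" if x: "x \<in> V" and y: "y \<in> V" for x y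
  proof -
    have "B (x - y) = B (x + sc (-1) y)" using sc_minus_one[of y] by simp
    also have "\<dots> = B x + B (sc (-1) y)" by (rule Badd[OF x sc_V[OF y]])
    also have "B (sc (-1) y) = sc (-1) (B y)" by (rule Bsc[OF y])
    also have "sc (-1) (B y) = - B y" by (rule sc_minus_one)
    finally show ?thesis by simp
  qed
  have B0: "B 0 = 0" using Bsc[OF zero_V, of 0] by (simp add: sc_zero_l)
  have Bbd: "nrm (B w) \<le> M * nrm w" if w: "w \<in> V" for w
  proof (cases "B w = 0")
    case True then show ?thesis using M0 nrm_nonneg[OF w] by simp
  next
    case False
    have pos: "nrm (B w) > 0" using nrm_pos[OF BV[OF w] False] .
    have "(nrm (B w))\<^sup>2 = Re (ip (B w) (B w))" by (rule nrm_sq[OF BV[OF w]])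
    also have "\<dots> \<le> cmod (ip (B w) (B w))" by (rule complex_Re_le_cmod)
    also have "ip (B w) (B w) = t w (B w)" using Bt[OF w BV[OF w]] by simp
    also have "cmod (t w (B w)) \<le> M * nrm w * nrm (B w)" by (rule MtM[OF w BV[OF w]])
    finally have "nrm (B w) * nrm (B w) \<le> (M * nrm w) * nrm (B w)" by (simp add: power2_eq_square)
    then show ?thesis using pos by simp
  qed
  have Blow: "C * nrm w \<le> nrm (B w)" if w: "w \<in> V" for w
  proof (cases "w = 0")
    case True then show ?thesis using nrm_nonneg[OF BV[OF w]] by simp
  next
    case False
    have pos: "nrm w > 0" using nrm_pos[OF w False] .
    have "C * (nrm w)\<^sup>2 \<le> cmod (t w w)" by (rule gard[OF w])
    also have "t w w = ip (B w) w" by (rule Bt[OF w w])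
    also have "cmod (ip (B w) w) \<le> nrm (B w) * nrm w" by (rule cauchy_schwarz[OF BV[OF w] w])
    finally have "(C * nrm w) * nrm w \<le> nrm (B w) * nrm w" by (simp add: power2_eq_square mult.assoc)
    then show ?thesis using pos by simp
  qed
  define R where "R = B ` V"
  have RV: "R \<subseteq> V" unfolding R_def using BV by blast
  have R0: "0 \<in> R" unfolding R_def using B0 zero_V by force
  have Radd: "a + b \<in> R" if ab: "a \<in> R" "b \<in> R" for a b
  proof -
    obtain x y where x: "x \<in> V" "a = B x" and y: "y \<in> V" "b = B y" using ab unfolding R_def by blast
    then have "a + b = B (x + y)" using Badd by simp
    then show ?thesis unfolding R_def using add_V x y by blast
  qed
  have Rsc: "sc c a \<in> R" if aR: "a \<in> R" for c a
  proof -
    obtain x where x: "x \<in> V" "a = B x" using aR unfolding R_def by blast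
    then have "sc c a = B (sc c x)" using Bsc by simp
    then show ?thesis unfolding R_def using sc_V x by blast
  qed
  have Rcl: "l \<in> R" if XR: "\<And>k. X k \<in> R" and lV: "l \<in> V"
      and lim: "\<forall>e>0. \<exists>N. \<forall>k\<ge>N. nrm (X k - l) < e" for X :: "nat \<Rightarrow> 'v" and l
  proof -
    have "\<forall>k. \<exists>w. w \<in> V \<and> X k = B w" using XR unfolding R_def by blast
    from choice[OF this] obtain W where W: "\<forall>k. W k \<in> V \<and> X k = B (W k)" by blast
    have WV: "W k \<in> V" for k using W by blast
    have XV: "X k \<in> V" for k using XR RV by blast
    have XB: "X k = B (W k)" for k using W by blast
    have Xc: "\<forall>e>0. \<exists>N. \<forall>m\<ge>N. \<forall>n\<ge>N. nrm (X m - X n) < e"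
    proof (intro allI impI)
      fix e :: real assume e: "0 < e"
      have "e/2 > 0" using e by simp
      with lim obtain N where N: "\<forall>k\<ge>N. nrm (X k - l) < e/2" by blast
      show "\<exists>N. \<forall>m\<ge>N. \<forall>n\<ge>N. nrm (X m - X n) < e"
      proof (intro exI allI impI)
        fix m n assume mn: "N \<le> m" "N \<le> n"
        have "nrm (X m - X n) \<le> nrm (X m - l) + nrm (l - X n)" by (rule nrm_triangle_diff[OF XV lV XV])
        also have "nrm (l - X n) = nrm (X n - l)" by (rule nrm_commute[OF lV XV])
        finally have "nrm (X m - X n) \<le> nrm (X m - l) + nrm (X n - l)" .
        moreover have "nrm (X m - l) < e/2" "nrm (X n - l) < e/2" using N mn by auto
        ultimately show "nrm (X m - X n) < e" by linarith
      qed
    qed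
    have Wc: "\<forall>e>0. \<exists>N. \<forall>m\<ge>N. \<forall>n\<ge>N. nrm (W m - W n) < e"
    proof (intro allI impI)
      fix e :: real assume e: "0 < e"
      have "C * e > 0" using e C by simp
      with Xc obtain N where N: "\<forall>m\<ge>N. \<forall>n\<ge>N. nrm (X m - X n) < C * e" by blast
      show "\<exists>N. \<forall>m\<ge>N. \<forall>n\<ge>N. nrm (W m - W n) < e"
      proof (intro exI allI impI)
        fix m n assume mn: "N \<le> m" "N \<le> n"
        have "C * nrm (W m - W n) \<le> nrm (B (W m - W n))" by (rule Blow[OF diff_V[OF WV WV]])
        also have "B (W m - W n) = X m - X n" using Bdiff[OF WV WV] XB by simp
        finally have "C * nrm (W m - W n) < C * e" using N mn by fastforce
        then show "nrm (W m - W n) < e" using C by simp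
      qed
    qed
    obtain w where wV: "w \<in> V" and wlim: "\<forall>e>0. \<exists>N. \<forall>n\<ge>N. nrm (W n - w) < e"
      using complete[OF WV Wc] by blast
    have "nrm (l - B w) \<le> 0"
    proof (rule field_le_epsilon)
      fix e :: real assume e: "0 < e"
      have "e/2 > 0" using e by simp
      with lim obtain N1 where N1: "\<forall>k\<ge>N1. nrm (X k - l) < e/2" by blast
      have "e / (2 * (M + 1)) > 0" using e M0 by simp
      with wlim obtain N2 where N2: "\<forall>k\<ge>N2. nrm (W k - w) < e / (2 * (M + 1))" by blast
      define k where "k = max N1 N2"
      have k1: "nrm (X k - l) < e/2" using N1 unfolding k_def by simp
      have k2: "nrm (W k - w) < e / (2 * (M + 1))" using N2 unfolding k_def by simp
      have BVw: "B w \<in> V" by (rule BV[OF wV])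
      have "nrm (l - B w) \<le> nrm (l - X k) + nrm (X k - B w)" by (rule nrm_triangle_diff[OF lV XV BVw])
      also have "nrm (l - X k) = nrm (X k - l)" by (rule nrm_commute[OF lV XV])
      also have "X k - B w = B (W k - w)" using Bdiff[OF WV wV] XB by simp
      also have "nrm (B (W k - w)) \<le> M * nrm (W k - w)" by (rule Bbd[OF diff_V[OF WV wV]])
      also have "M * nrm (W k - w) \<le> M * (e / (2 * (M + 1)))" using k2 M0 by (intro mult_left_mono) auto
      also have "M * (e / (2 * (M + 1))) \<le> e / 2" using M0 e by (simp add: field_simps)
      finally show "nrm (l - B w) \<le> 0 + e" using k1 by simp
    qed
    then have "nrm (l - B w) = 0" using nrm_nonneg[OF diff_V[OF lV BV[OF wV]]] by simp
    then have "l - B w = 0" using nrm_zero_iff[OF diff_V[OF lV BV[OF wV]]] by simp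
    then have "l = B w" by simp
    then show ?thesis unfolding R_def using wV by blast
  qed
  have surj: "x \<in> R" if xV: "x \<in> V" for x
  proof -
    have ex: "\<exists>m\<in>R. \<forall>p\<in>R. ip (x - m) p = 0"
    proof (rule projection)
      show "R \<subseteq> V" by (rule RV)
      show "0 \<in> R" by (rule R0)
      show "\<And>a b. a \<in> R \<Longrightarrow> b \<in> R \<Longrightarrow> a + b \<in> R" by (rule Radd)
      show "\<And>c a. a \<in> R \<Longrightarrow> sc c a \<in> R" by (rule Rsc)
      show "x \<in> V" by (rule xV)
      fix X :: "nat \<Rightarrow> 'v" and l assume a1: "\<And>k. X k \<in> R" and a2: "l \<in> V"
        and a3: "\<forall>e>0. \<exists>N. \<forall>k\<ge>N. nrm (X k - l) < e"
      show "l \<in> R" using Rcl[OF a1 a2 a3] .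
    qed
    then obtain m where mR: "m \<in> R" and orth: "\<forall>p\<in>R. ip (x - m) p = 0" by blast
    define y where "y = x - m"
    have mV: "m \<in> V" using mR RV by blast
    have yV: "y \<in> V" unfolding y_def using xV mV diff_V by blast
    have "B y \<in> R" unfolding R_def using yV by blast
    then have o: "ip y (B y) = 0" using orth unfolding y_def by blast
    have "t y y = ip (B y) y" by (rule Bt[OF yV yV])
    also have "\<dots> = cnj (ip y (B y))" by (rule ip_sym[OF yV BV[OF yV]])
    finally have "t y y = 0" using o by simp
    then have "C * (nrm y)\<^sup>2 \<le> 0" using gard[OF yV] by simp
    then have "(nrm y)\<^sup>2 \<le> 0" using C by (simp add: mult_le_0_iff)
    then have "nrm y = 0" by simp
    then have "y = 0" using nrm_zero_iff[OF yV] by simp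
    then show ?thesis using mR unfolding y_def by simp
  qed
  obtain r where rV: "r \<in> V" and r: "\<forall>v\<in>V. \<phi> v = ip r v" using riesz[OF \<phi>] by blast
  obtain w where wV: "w \<in> V" and rw: "r = B w" using surj[OF rV] unfolding R_def by blast
  have "\<forall>v\<in>V. t w v = \<phi> v" using Bt[OF wV] r rw by simp
  then show ?thesis using wV by blast
qed

end

theorem lemma3p2:
  fixes sc :: "complex \<Rightarrow> 'v::ab_group_add \<Rightarrow> 'v"
    and ip0 ipH :: "'v \<Rightarrow> 'v \<Rightarrow> complex"
    and V :: "'v set"
    and D mu_inv eps :: "'v \<Rightarrow> 'v"
    and b a :: "'v \<Rightarrow> 'v \<Rightarrow> complex"
    and C_G1 C_G2 :: real
    and Ainv :: "('v \<Rightarrow> complex) \<Rightarrow> 'v"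
  assumes H0: "hilbert_space_on UNIV sc ip0"
    and H: "hilbert_space_on V sc ipH"
    and norm_le: "\<forall>v\<in>V. ip_norm ip0 v \<le> ip_norm ipH v"
    and dense: "\<forall>f. \<forall>e>0. \<exists>v\<in>V. ip_norm ip0 (f - v) < e"
    and D_lin: "\<forall>u\<in>V. \<forall>v\<in>V. D (u + v) = D u + D v"
    and D_hom: "\<forall>c. \<forall>u\<in>V. D (sc c u) = sc c (D u)"
    and D_bd: "\<forall>v\<in>V. ip_norm ip0 (D v) \<le> ip_norm ipH v"
    and b_form: "bounded_sesquilinear_on V sc ipH b"
    and mu: "bounded_clinear_op sc ip0 mu_inv"
    and ep: "bounded_clinear_op sc ip0 eps"
    and a_def: "\<forall>u v. a u v = ip0 (mu_inv (D u)) (D v) + b u v - ip0 (eps u) v"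
    and C1: "C_G1 > 0" and C2: "C_G2 > 0"
    and garding: "\<forall>v\<in>V. cmod (a v v + complex_of_real (C_G2 * (ip_norm ip0 v)\<^sup>2))
                          \<ge> C_G1 * (ip_norm ipH v)\<^sup>2"
    and inv_range: "\<forall>\<phi>\<in>dual_space V sc ipH. Ainv \<phi> \<in> V \<and> form_op V a (Ainv \<phi>) = \<phi>"
    and inv_left: "\<forall>u\<in>V. Ainv (form_op V a u) = u"
    and inv_bounded: "\<exists>M. \<forall>\<phi>\<in>dual_space V sc ipH.
                          ip_norm ipH (Ainv \<phi>) \<le> M * dual_norm V ipH \<phi>"
  shows "opnorm_0_H V ip0 ipH Ainv \<le> opnorm_star_H V sc ipH Ainv
       \<and> opnorm_star_H V sc ipH Ainv \<le> inverse C_G1 * (1 + C_G2 * opnorm_0_H V ip0 ipH Ainv)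
       \<and> opnorm_0_0 V ip0 Ainv \<le> opnorm_0_H V ip0 ipH Ainv
       \<and> opnorm_0_H V ip0 ipH Ainv \<le> C_G1 powr (-1/2) * opnorm_0_0 V ip0 Ainv
              * sqrt (C_G2 + inverse (opnorm_0_0 V ip0 Ainv))"
proof -
  interpret Z: hs UNIV sc ip0 by unfold_locales (rule H0)
  interpret W: hs V sc ipH by unfold_locales (rule H)
  let ?n0 = "ip_norm ip0" and ?nH = "ip_norm ipH"
  have n0le: "?n0 v \<le> ?nH v" if "v \<in> V" for v using norm_le that by blast
  have n0nn: "0 \<le> ?n0 v" for v using Z.nrm_nonneg by simp
  have Dadd: "D (x + y) = D x + D y" if "x \<in> V" "y \<in> V" for x y using D_lin that by blast
  have Dsc: "D (sc c x) = sc c (D x)" if "x \<in> V" for c x using D_hom that by blast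
  have Dbd: "?n0 (D v) \<le> ?nH v" if "v \<in> V" for v using D_bd that by blast
  have mu_add: "mu_inv (x + y) = mu_inv x + mu_inv y" for x y using mu unfolding bounded_clinear_op_def by blast
  have mu_sc: "mu_inv (sc c x) = sc c (mu_inv x)" for c x using mu unfolding bounded_clinear_op_def by blast
  obtain Mmu where Mmu: "\<forall>x. ?n0 (mu_inv x) \<le> Mmu * ?n0 x" using mu unfolding bounded_clinear_op_def by blast
  have ep_add: "eps (x + y) = eps x + eps y" for x y using ep unfolding bounded_clinear_op_def by blast
  have ep_sc: "eps (sc c x) = sc c (eps x)" for c x using ep unfolding bounded_clinear_op_def by blast
  obtain Mep where Mep: "\<forall>x. ?n0 (eps x) \<le> Mep * ?n0 x" using ep unfolding bounded_clinear_op_def by blast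
  have Mmu': "?n0 (mu_inv x) \<le> \<bar>Mmu\<bar> * ?n0 x" for x
  proof -
    have "Mmu * ?n0 x \<le> \<bar>Mmu\<bar> * ?n0 x" using n0nn by (intro mult_right_mono) auto
    then show ?thesis using Mmu by (meson order_trans)
  qed
  have Mep': "?n0 (eps x) \<le> \<bar>Mep\<bar> * ?n0 x" for x
  proof -
    have "Mep * ?n0 x \<le> \<bar>Mep\<bar> * ?n0 x" using n0nn by (intro mult_right_mono) auto
    then show ?thesis using Mep by (meson order_trans)
  qed
  have b_add1: "b (x + y) z = b x z + b y z" if "x \<in> V" "y \<in> V" "z \<in> V" for x y z
    using W.ses_add1[OF b_form] that by blast
  have b_add2: "b x (y + z) = b x y + b x z" if "x \<in> V" "y \<in> V" "z \<in> V" for x y z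
    using W.ses_add2[OF b_form] that by blast
  have b_sc1: "b (sc c x) y = c * b x y" if "x \<in> V" "y \<in> V" for c x y
    using W.ses_sc1[OF b_form] that by blast
  have b_sc2: "b x (sc c y) = cnj c * b x y" if "x \<in> V" "y \<in> V" for c x y
    using W.ses_sc2[OF b_form] that by blast
  obtain Mb where Mb: "\<forall>x\<in>V. \<forall>y\<in>V. cmod (b x y) \<le> Mb * ?nH x * ?nH y" using W.ses_bd[OF b_form] by blast
  have a_eq: "a u v = ip0 (mu_inv (D u)) (D v) + b u v - ip0 (eps u) v" for u v using a_def by blast
  define t where "t u v = a u v + complex_of_real C_G2 * ip0 u v" for u v
  have a_add1: "a (x + y) z = a x z + a y z" if xyz: "x \<in> V" "y \<in> V" "z \<in> V" for x y z
    unfolding a_eq using xyz Dadd mu_add ep_add b_add1 Z.ip_add_l by simp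
  have a_add2: "a x (y + z) = a x y + a x z" if xyz: "x \<in> V" "y \<in> V" "z \<in> V" for x y z
    unfolding a_eq using xyz Dadd b_add2 Z.ip_add_r by simp
  have a_sc1: "a (sc c x) y = c * a x y" if xy: "x \<in> V" "y \<in> V" for c x y
    unfolding a_eq using xy Dsc mu_sc ep_sc b_sc1 Z.ip_sc_l by (simp add: algebra_simps)
  have a_sc2: "a x (sc c y) = cnj c * a x y" if xy: "x \<in> V" "y \<in> V" for c x y
    unfolding a_eq using xy Dsc b_sc2 Z.ip_sc_r by (simp add: algebra_simps)
  define Ma where "Ma = \<bar>Mmu\<bar> + \<bar>Mb\<bar> + \<bar>Mep\<bar>"
  have a_bd: "cmod (a x y) \<le> Ma * ?nH x * ?nH y" if xy: "x \<in> V" "y \<in> V" for x y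
  proof -
    have nx: "0 \<le> ?nH x" and ny: "0 \<le> ?nH y" using W.nrm_nonneg xy by auto
    have "cmod (ip0 (mu_inv (D x)) (D y)) \<le> ?n0 (mu_inv (D x)) * ?n0 (D y)" by (rule Z.cauchy_schwarz) auto
    also have "\<dots> \<le> (\<bar>Mmu\<bar> * ?n0 (D x)) * ?n0 (D y)" using Mmu' n0nn by (intro mult_right_mono) auto
    also have "\<dots> \<le> (\<bar>Mmu\<bar> * ?nH x) * ?nH y"
      using Dbd xy n0nn nx by (intro mult_mono mult_left_mono) auto
    finally have t1: "cmod (ip0 (mu_inv (D x)) (D y)) \<le> \<bar>Mmu\<bar> * ?nH x * ?nH y" .
    have "cmod (b x y) \<le> Mb * ?nH x * ?nH y" using Mb xy by blast
    also have "\<dots> \<le> \<bar>Mb\<bar> * ?nH x * ?nH y" using nx ny by (intro mult_right_mono) auto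
    finally have t2: "cmod (b x y) \<le> \<bar>Mb\<bar> * ?nH x * ?nH y" .
    have "cmod (ip0 (eps x) y) \<le> ?n0 (eps x) * ?n0 y" by (rule Z.cauchy_schwarz) auto
    also have "\<dots> \<le> (\<bar>Mep\<bar> * ?n0 x) * ?n0 y" using Mep' n0nn by (intro mult_right_mono) auto
    also have "\<dots> \<le> (\<bar>Mep\<bar> * ?nH x) * ?nH y"
      using n0le xy n0nn nx by (intro mult_mono mult_left_mono) auto
    finally have t3: "cmod (ip0 (eps x) y) \<le> \<bar>Mep\<bar> * ?nH x * ?nH y" .
    have "cmod (a x y) \<le> cmod (ip0 (mu_inv (D x)) (D y)) + cmod (b x y) + cmod (ip0 (eps x) y)"
    proof -
      have "cmod (a x y) \<le> cmod (ip0 (mu_inv (D x)) (D y) + b x y) + cmod (ip0 (eps x) y)"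
        unfolding a_eq by (rule norm_triangle_ineq4)
      moreover have "cmod (ip0 (mu_inv (D x)) (D y) + b x y) \<le> cmod (ip0 (mu_inv (D x)) (D y)) + cmod (b x y)"
        by (rule norm_triangle_ineq)
      ultimately show ?thesis by linarith
    qed
    also have "\<dots> \<le> Ma * ?nH x * ?nH y" using t1 t2 t3 unfolding Ma_def by (simp add: algebra_simps)
    finally show ?thesis .
  qed
  have a_ses: "bounded_sesquilinear_on V sc ipH a"
    unfolding bounded_sesquilinear_on_def using a_add1 a_add2 a_sc1 a_sc2 a_bd by blast
  have t_ses: "bounded_sesquilinear_on V sc ipH t"
  proof -
    have "cmod (t x y) \<le> (Ma + C_G2) * ?nH x * ?nH y" if xy: "x \<in> V" "y \<in> V" for x y
    proof -
      have nx: "0 \<le> ?nH x" and ny: "0 \<le> ?nH y" using W.nrm_nonneg xy by auto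
      have "cmod (ip0 x y) \<le> ?n0 x * ?n0 y" by (rule Z.cauchy_schwarz) auto
      also have "\<dots> \<le> ?nH x * ?nH y" using n0le xy n0nn nx by (intro mult_mono) auto
      finally have c: "cmod (complex_of_real C_G2 * ip0 x y) \<le> C_G2 * (?nH x * ?nH y)"
        using C2 by (simp add: norm_mult mult_left_mono)
      have "cmod (t x y) \<le> cmod (a x y) + cmod (complex_of_real C_G2 * ip0 x y)"
        unfolding t_def by (rule norm_triangle_ineq)
      also have "\<dots> \<le> Ma * ?nH x * ?nH y + C_G2 * (?nH x * ?nH y)" using a_bd[OF xy] c by simp
      finally show ?thesis by (simp add: algebra_simps)
    qed
    moreover have "t (x + y) z = t x z + t y z" if "x \<in> V" "y \<in> V" "z \<in> V" for x y z
      unfolding t_def using a_add1[OF that] Z.ip_add_l by (simp add: algebra_simps)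
    moreover have "t x (y + z) = t x y + t x z" if "x \<in> V" "y \<in> V" "z \<in> V" for x y z
      unfolding t_def using a_add2[OF that] Z.ip_add_r by (simp add: algebra_simps)
    moreover have "t (sc c x) y = c * t x y" if "x \<in> V" "y \<in> V" for c x y
      unfolding t_def using a_sc1[OF that] Z.ip_sc_l by (simp add: algebra_simps)
    moreover have "t x (sc c y) = cnj c * t x y" if "x \<in> V" "y \<in> V" for c x y
      unfolding t_def using a_sc2[OF that] Z.ip_sc_r by (simp add: algebra_simps)
    ultimately show ?thesis unfolding bounded_sesquilinear_on_def by blast
  qed
  have nH_nn: "0 \<le> ?nH v" if "v \<in> V" for v using W.nrm_nonneg that by blast
  have gard: "C_G1 * (?nH w)\<^sup>2 \<le> cmod (t w w)" if wV: "w \<in> V" for w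
  proof -
    have "ip0 w w = complex_of_real ((?n0 w)\<^sup>2)" using Z.ip_self_real by simp
    then have "t w w = a w w + complex_of_real (C_G2 * (?n0 w)\<^sup>2)" unfolding t_def by simp
    then show ?thesis using garding wV by simp
  qed
  have emb_bound: "cmod (emb V ip0 f x) \<le> ?n0 f * ?nH x" if xV: "x \<in> V" for f x
  proof -
    have "cmod (ip0 f x) \<le> ?n0 f * ?n0 x" by (rule Z.cauchy_schwarz) auto
    also have "\<dots> \<le> ?n0 f * ?nH x" using n0le[OF xV] n0nn by (intro mult_left_mono) auto
    finally show ?thesis unfolding emb_def using xV by simp
  qed
  have emb_dual: "emb V ip0 f \<in> dual_space V sc ipH" for f
  proof -
    have "\<forall>x\<in>V. \<forall>y\<in>V. emb V ip0 f (x + y) = emb V ip0 f x + emb V ip0 f y"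
      unfolding emb_def using W.add_V Z.ip_add_r by simp
    moreover have "\<forall>c. \<forall>x\<in>V. emb V ip0 f (sc c x) = cnj c * emb V ip0 f x"
      unfolding emb_def using W.sc_V Z.ip_sc_r by simp
    moreover have "\<exists>M. \<forall>x\<in>V. cmod (emb V ip0 f x) \<le> M * ?nH x" using emb_bound by blast
    moreover have "\<forall>x. x \<notin> V \<longrightarrow> emb V ip0 f x = 0" unfolding emb_def by simp
    ultimately show ?thesis unfolding dual_space_def by blast
  qed
  have emb_dn: "dual_norm V ipH (emb V ip0 f) \<le> ?n0 f" for f
    using W.dual_norm_le[of "emb V ip0 f" "?n0 f"] emb_bound n0nn by blast
  have AV: "Ainv \<phi> \<in> V" if "\<phi> \<in> dual_space V sc ipH" for \<phi> using inv_range that by blast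
  have Aeq: "a (Ainv \<phi>) v = \<phi> v" if "\<phi> \<in> dual_space V sc ipH" "v \<in> V" for \<phi> v
  proof -
    have "form_op V a (Ainv \<phi>) = \<phi>" using inv_range that(1) by blast
    then have "form_op V a (Ainv \<phi>) v = \<phi> v" by simp
    then show ?thesis unfolding form_op_def using that(2) by simp
  qed
  have a0: "a 0 v = 0" if "v \<in> V" for v
    using a_sc1[OF W.zero_V that, of 0] by (simp add: W.sc_zero_l)
  have form0: "form_op V a 0 = (\<lambda>_. 0)" unfolding form_op_def using a0 by auto
  have A0: "Ainv (\<lambda>_. 0) = 0" using inv_left W.zero_V form0 by metis
  have emb0: "emb V ip0 0 = (\<lambda>_. 0)" unfolding emb_def using Z.ip_zero_l by auto
  obtain Mi where Mi: "\<forall>\<phi>\<in>dual_space V sc ipH. ?nH (Ainv \<phi>) \<le> Mi * dual_norm V ipH \<phi>"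
    using inv_bounded by blast
  have Mi': "?nH (Ainv \<phi>) \<le> \<bar>Mi\<bar> * dual_norm V ipH \<phi>" if "\<phi> \<in> dual_space V sc ipH" for \<phi>
  proof -
    have "Mi * dual_norm V ipH \<phi> \<le> \<bar>Mi\<bar> * dual_norm V ipH \<phi>"
      using W.dual_norm_nonneg[OF that] by (intro mult_right_mono) auto
    then show ?thesis using Mi that by fastforce
  qed
  have n0pos: "?n0 f > 0" if "f \<noteq> 0" for f using Z.nrm_pos that by blast
  have embH: "?nH (Ainv (emb V ip0 f)) \<le> \<bar>Mi\<bar> * ?n0 f" for f
  proof -
    have "?nH (Ainv (emb V ip0 f)) \<le> \<bar>Mi\<bar> * dual_norm V ipH (emb V ip0 f)" by (rule Mi'[OF emb_dual])
    also have "\<dots> \<le> \<bar>Mi\<bar> * ?n0 f" using emb_dn by (intro mult_left_mono) auto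
    finally show ?thesis .
  qed
  define S0H where "S0H = insert 0 {?nH (Ainv (emb V ip0 f)) / ?n0 f | f. f \<noteq> 0}"
  define S00 where "S00 = insert 0 {?n0 (Ainv (emb V ip0 f)) / ?n0 f | f. f \<noteq> 0}"
  define Sst where "Sst = insert 0 {?nH (Ainv \<phi>) / dual_norm V ipH \<phi> | \<phi>. \<phi> \<in> dual_space V sc ipH \<and> \<phi> \<noteq> (\<lambda>_. 0)}"
  have opn0H: "opnorm_0_H V ip0 ipH Ainv = Sup S0H" unfolding S0H_def opnorm_0_H_def ..
  have opn00: "opnorm_0_0 V ip0 Ainv = Sup S00" unfolding S00_def opnorm_0_0_def ..
  have opnst: "opnorm_star_H V sc ipH Ainv = Sup Sst" unfolding Sst_def opnorm_star_H_def ..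
  have bdd0H: "bdd_above S0H"
  proof -
    have "z \<le> \<bar>Mi\<bar>" if "z \<in> S0H" for z
    proof -
      from that consider "z = 0" | f where "f \<noteq> 0" "z = ?nH (Ainv (emb V ip0 f)) / ?n0 f"
        unfolding S0H_def by blast
      then show ?thesis
      proof cases
        case 1 then show ?thesis by simp
      next
        case 2 then show ?thesis using embH[of f] n0pos[of f] by (simp add: pos_divide_le_eq)
      qed
    qed
    then show ?thesis unfolding bdd_above_def by blast
  qed
  have bdd00: "bdd_above S00"
  proof -
    have "z \<le> \<bar>Mi\<bar>" if "z \<in> S00" for z
    proof -
      from that consider "z = 0" | f where "f \<noteq> 0" "z = ?n0 (Ainv (emb V ip0 f)) / ?n0 f"
        unfolding S00_def by blast
      then show ?thesis
      proof cases
        case 1 then show ?thesis by simp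
      next
        case 2
        have "?n0 (Ainv (emb V ip0 f)) \<le> \<bar>Mi\<bar> * ?n0 f" using embH[of f] n0le[OF AV[OF emb_dual[of f]]] by linarith
        then show ?thesis using 2 n0pos[of f] by (simp add: pos_divide_le_eq)
      qed
    qed
    then show ?thesis unfolding bdd_above_def by blast
  qed
  have bddst: "bdd_above Sst"
  proof -
    have "z \<le> \<bar>Mi\<bar>" if "z \<in> Sst" for z
    proof -
      from that consider "z = 0" | \<phi> where "\<phi> \<in> dual_space V sc ipH" "\<phi> \<noteq> (\<lambda>_. 0)"
          "z = ?nH (Ainv \<phi>) / dual_norm V ipH \<phi>"
        unfolding Sst_def by blast
      then show ?thesis
      proof cases
        case 1 then show ?thesis by simp
      next
        case 2 then show ?thesis using Mi'[of \<phi>] W.dual_norm_pos[of \<phi>] by (simp add: pos_divide_le_eq)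
      qed
    qed
    then show ?thesis unfolding bdd_above_def by blast
  qed
  define N0H where "N0H = Sup S0H"
  define N00 where "N00 = Sup S00"
  define Nst where "Nst = Sup Sst"
  have N0H0: "0 \<le> N0H" unfolding N0H_def using bdd0H by (intro cSup_upper) (auto simp: S0H_def)
  have N000: "0 \<le> N00" unfolding N00_def using bdd00 by (intro cSup_upper) (auto simp: S00_def)
  have Nst0: "0 \<le> Nst" unfolding Nst_def using bddst by (intro cSup_upper) (auto simp: Sst_def)
  have el0H: "?nH (Ainv (emb V ip0 f)) \<le> N0H * ?n0 f" for f
  proof (cases "f = 0")
    case True then show ?thesis using emb0 A0 by simp
  next
    case False
    have "?nH (Ainv (emb V ip0 f)) / ?n0 f \<le> N0H" unfolding N0H_def
      using False bdd0H by (intro cSup_upper) (auto simp: S0H_def)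
    then show ?thesis using n0pos[OF False] by (simp add: pos_divide_le_eq)
  qed
  have el00: "?n0 (Ainv (emb V ip0 f)) \<le> N00 * ?n0 f" for f
  proof (cases "f = 0")
    case True then show ?thesis using emb0 A0 by simp
  next
    case False
    have "?n0 (Ainv (emb V ip0 f)) / ?n0 f \<le> N00" unfolding N00_def
      using False bdd00 by (intro cSup_upper) (auto simp: S00_def)
    then show ?thesis using n0pos[OF False] by (simp add: pos_divide_le_eq)
  qed
  have claim1: "N0H \<le> Nst" unfolding N0H_def
  proof (rule cSup_least)
    show "S0H \<noteq> {}" unfolding S0H_def by blast
    fix z assume "z \<in> S0H"
    then consider "z = 0" | f where "f \<noteq> 0" "z = ?nH (Ainv (emb V ip0 f)) / ?n0 f"
      unfolding S0H_def by blast
    then show "z \<le> Nst"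
    proof cases
      case 1 then show ?thesis using Nst0 by simp
    next
      case 2
      show ?thesis
      proof (cases "emb V ip0 f = (\<lambda>_. 0)")
        case True then show ?thesis using 2 A0 Nst0 by simp
      next
        case False
        have dp: "dual_norm V ipH (emb V ip0 f) > 0" by (rule W.dual_norm_pos[OF emb_dual False])
        have "z \<le> ?nH (Ainv (emb V ip0 f)) / dual_norm V ipH (emb V ip0 f)"
          unfolding 2 using dp emb_dn[of f] nH_nn[OF AV[OF emb_dual[of f]]]
          by (intro divide_left_mono) auto
        also have "\<dots> \<le> Nst" unfolding Nst_def using bddst emb_dual[of f] False
          by (intro cSup_upper) (auto simp: Sst_def)
        finally show ?thesis .
      qed
    qed
  qed
  have claim3: "N00 \<le> N0H" unfolding N00_def
  proof (rule cSup_least)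
    show "S00 \<noteq> {}" unfolding S00_def by blast
    fix z assume "z \<in> S00"
    then consider "z = 0" | f where "f \<noteq> 0" "z = ?n0 (Ainv (emb V ip0 f)) / ?n0 f"
      unfolding S00_def by blast
    then show "z \<le> N0H"
    proof cases
      case 1 then show ?thesis using N0H0 by simp
    next
      case 2
      have "z \<le> ?nH (Ainv (emb V ip0 f)) / ?n0 f"
        unfolding 2 using n0le[OF AV[OF emb_dual[of f]]] n0pos[OF 2(1)] by (intro divide_right_mono) auto
      also have "\<dots> \<le> N0H" unfolding N0H_def using bdd0H 2(1)
        by (intro cSup_upper) (auto simp: S0H_def)
      finally show ?thesis .
    qed
  qed
  have claim2: "Nst \<le> inverse C_G1 * (1 + C_G2 * N0H)" unfolding Nst_def
  proof (rule cSup_least)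
    show "Sst \<noteq> {}" unfolding Sst_def by blast
    have rhs0: "0 \<le> inverse C_G1 * (1 + C_G2 * N0H)" using C1 C2 N0H0 by simp
    fix z assume "z \<in> Sst"
    then consider "z = 0" | \<phi> where "\<phi> \<in> dual_space V sc ipH" "\<phi> \<noteq> (\<lambda>_. 0)"
        "z = ?nH (Ainv \<phi>) / dual_norm V ipH \<phi>"
      unfolding Sst_def by blast
    then show "z \<le> inverse C_G1 * (1 + C_G2 * N0H)"
    proof cases
      case 1 then show ?thesis using rhs0 by simp
    next
      case 2
      note \<phi> = 2(1)
      define dn where "dn = dual_norm V ipH \<phi>"
      have dp: "dn > 0" unfolding dn_def by (rule W.dual_norm_pos[OF \<phi> 2(2)])
      obtain w where wV: "w \<in> V" and tw: "\<forall>v\<in>V. t w v = \<phi> v"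
        using W.lax_milgram[OF t_ses C1 gard \<phi>] by blast
      have wb: "C_G1 * ?nH w \<le> dn"
      proof (cases "?nH w = 0")
        case True then show ?thesis using dp by simp
      next
        case False
        then have pw: "?nH w > 0" using nH_nn[OF wV] by simp
        have "C_G1 * (?nH w)\<^sup>2 \<le> cmod (t w w)" by (rule gard[OF wV])
        also have "t w w = \<phi> w" using tw wV by blast
        also have "cmod (\<phi> w) \<le> dn * ?nH w" unfolding dn_def by (rule W.dual_le[OF \<phi> wV])
        finally have "(C_G1 * ?nH w) * ?nH w \<le> dn * ?nH w" by (simp add: power2_eq_square mult.assoc)
        then show ?thesis using pw by simp
      qed
      define z' where "z' = Ainv (emb V ip0 w)"
      have zV: "z' \<in> V" unfolding z'_def by (rule AV[OF emb_dual])
      have az: "a z' v = ip0 w v" if "v \<in> V" for v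
        unfolding z'_def using Aeq[OF emb_dual that] that unfolding emb_def by simp
      define u where "u = w + sc (complex_of_real C_G2) z'"
      have uV: "u \<in> V" unfolding u_def using wV zV W.sc_V W.add_V by blast
      have au: "a u v = \<phi> v" if vV: "v \<in> V" for v
      proof -
        have "a u v = a w v + a (sc (complex_of_real C_G2) z') v"
          unfolding u_def by (rule a_add1[OF wV W.sc_V[OF zV] vV])
        also have "a (sc (complex_of_real C_G2) z') v = complex_of_real C_G2 * a z' v"
          by (rule a_sc1[OF zV vV])
        also have "a z' v = ip0 w v" by (rule az[OF vV])
        also have "a w v + complex_of_real C_G2 * ip0 w v = t w v" unfolding t_def ..
        also have "\<dots> = \<phi> v" using tw vV by blast
        finally show ?thesis .
      qed
      have "form_op V a u = \<phi>"
      proof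
        fix v show "form_op V a u v = \<phi> v"
          unfolding form_op_def using au W.dual_out[OF \<phi>, of v] by auto
      qed
      then have Au: "Ainv \<phi> = u" using inv_left uV by metis
      have "?nH u \<le> ?nH w + ?nH (sc (complex_of_real C_G2) z')"
        unfolding u_def by (rule W.nrm_triangle[OF wV W.sc_V[OF zV]])
      also have "?nH (sc (complex_of_real C_G2) z') = C_G2 * ?nH z'"
        using W.nrm_sc[OF zV] C2 by simp
      also have "?nH z' \<le> N0H * ?n0 w" unfolding z'_def by (rule el0H)
      also have "N0H * ?n0 w \<le> N0H * ?nH w" using n0le[OF wV] N0H0 by (intro mult_left_mono) auto
      finally have "?nH u \<le> (1 + C_G2 * N0H) * ?nH w" using C2 by (simp add: algebra_simps)
      also have "\<dots> \<le> (1 + C_G2 * N0H) * (dn / C_G1)"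
        using wb C1 C2 N0H0 by (intro mult_left_mono) (auto simp: pos_le_divide_eq mult.commute)
      finally have "?nH (Ainv \<phi>) \<le> (1 + C_G2 * N0H) * (dn / C_G1)" unfolding Au .
      then have "?nH (Ainv \<phi>) / dn \<le> (1 + C_G2 * N0H) / C_G1" using dp
        by (simp add: pos_divide_le_eq)
      then show ?thesis using 2(3) unfolding dn_def by (simp add: divide_inverse mult.commute)
    qed
  qed
  define Q where "Q = (N00 + C_G2 * N00\<^sup>2) / C_G1"
  have Q0: "0 \<le> Q" unfolding Q_def using N000 C1 C2 by simp
  have claim4: "N0H \<le> sqrt Q" unfolding N0H_def
  proof (rule cSup_least)
    show "S0H \<noteq> {}" unfolding S0H_def by blast
    fix z assume "z \<in> S0H"
    then consider "z = 0" | f where "f \<noteq> 0" "z = ?nH (Ainv (emb V ip0 f)) / ?n0 f"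
      unfolding S0H_def by blast
    then show "z \<le> sqrt Q"
    proof cases
      case 1 then show ?thesis using Q0 by simp
    next
      case 2
      define u where "u = Ainv (emb V ip0 f)"
      have uV: "u \<in> V" unfolding u_def by (rule AV[OF emb_dual])
      have au: "a u u = ip0 f u" unfolding u_def using Aeq[OF emb_dual uV[unfolded u_def]] uV[unfolded u_def]
        unfolding emb_def by simp
      have nu: "?n0 u \<le> N00 * ?n0 f" unfolding u_def by (rule el00)
      have "C_G1 * (?nH u)\<^sup>2 \<le> cmod (a u u + complex_of_real (C_G2 * (?n0 u)\<^sup>2))"
        using garding uV by blast
      also have "\<dots> \<le> cmod (a u u) + cmod (complex_of_real (C_G2 * (?n0 u)\<^sup>2))" by (rule norm_triangle_ineq)
      also have "cmod (complex_of_real (C_G2 * (?n0 u)\<^sup>2)) = C_G2 * (?n0 u)\<^sup>2"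
        by (rule trans[OF norm_of_real abs_of_nonneg]) (use C2 in simp)
      also have "cmod (a u u) \<le> ?n0 f * ?n0 u" unfolding au by (rule Z.cauchy_schwarz) auto
      also have "?n0 f * ?n0 u \<le> ?n0 f * (N00 * ?n0 f)" using nu n0nn by (intro mult_left_mono) auto
      also have "C_G2 * (?n0 u)\<^sup>2 \<le> C_G2 * (N00 * ?n0 f)\<^sup>2"
        using nu n0nn C2 by (intro mult_left_mono power_mono) auto
      finally have "C_G1 * (?nH u)\<^sup>2 \<le> (N00 + C_G2 * N00\<^sup>2) * (?n0 f)\<^sup>2"
        by (simp add: algebra_simps power2_eq_square)
      then have "(?nH u)\<^sup>2 \<le> Q * (?n0 f)\<^sup>2" unfolding Q_def using C1
        by (simp add: pos_le_divide_eq mult.commute mult.left_commute divide_simps)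
      then have "sqrt ((?nH u)\<^sup>2) \<le> sqrt (Q * (?n0 f)\<^sup>2)" by (rule real_sqrt_le_mono)
      then have "?nH u \<le> sqrt Q * ?n0 f" using nH_nn[OF uV] n0nn by (simp add: real_sqrt_mult)
      then show ?thesis unfolding 2 u_def[symmetric] using n0pos[OF 2(1)] by (simp add: pos_divide_le_eq)
    qed
  qed
  have rhs4: "C_G1 powr (-1/2) * N00 * sqrt (C_G2 + inverse N00) = sqrt Q"
  proof -
    have "C_G1 powr (-1/2) = C_G1 powr (- (1/2))" by simp
    also have "\<dots> = inverse (C_G1 powr (1/2))" by (rule powr_minus)
    also have "C_G1 powr (1/2) = sqrt C_G1" using C1 by (simp add: powr_half_sqrt)
    finally have p: "C_G1 powr (-1/2) = inverse (sqrt C_G1)" .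
    show ?thesis
    proof (cases "N00 = 0")
      case True then show ?thesis unfolding Q_def by simp
    next
      case False
      then have Np: "N00 > 0" using N000 by simp
      have "N00 + C_G2 * N00\<^sup>2 = N00\<^sup>2 * (C_G2 + inverse N00)" using Np
        by (simp add: field_simps power2_eq_square)
      then have "sqrt Q = sqrt (N00\<^sup>2 * (C_G2 + inverse N00)) / sqrt C_G1"
        unfolding Q_def by (simp add: real_sqrt_divide)
      also have "sqrt (N00\<^sup>2 * (C_G2 + inverse N00)) = N00 * sqrt (C_G2 + inverse N00)"
        using Np by (simp add: real_sqrt_mult)
      finally show ?thesis unfolding p by (simp add: divide_inverse mult.commute)
    qed
  qed
  show ?thesis unfolding opn0H opn00 opnst
    using claim1 claim2 claim3 claim4 rhs4 unfolding N0H_def N00_def Nst_def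
    by simp
qed

end
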